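(* For all real $h,t$ with $0<h<t<1$, $$\lim_{k \to \infty} \sum_{n=0}^{\infty} B^n_k(t;h) = \frac{1-h}{t-h},$$ where the limit is over nonnegative integers $k$.
   Context: For $h\ge 0$, the $h$-Bernstein polynomials are $$B^n_k(t;h) = \binom{n}{k}\frac{\prod_{i=0}^{k-1}(t+ih)\prod_{i=0}^{n-k-1}(1-t+ih)}{\prod_{i=0}^{n-1}(1+ih)}$$ for integers $0\le k\le n$ (empty products equal $1$), and $B^n_k(t;h)=0$ for $n<k$. *)

theory Defs
  imports "HOL-Analysis.Analysis"
begin

definition hBernstein :: "nat \<Rightarrow> nat \<Rightarrow> real \<Rightarrow> real \<Rightarrow> real" where
  "hBernstein n k t h =
     (if n < k then 0
      else real (n choose k) *
           ((\<Prod>i<k. t + real i * h) * (\<Prod>i<n - k. 1 - t + real i * h))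
           / (\<Prod>i<n. 1 + real i * h))"

end

theory Submission
  imports Defs
begin

lemma key_zero:
  fixes f g :: "nat \<Rightarrow> real"
  assumes sf: "summable f" and nn: "\<And>n. f n \<ge> 0" and lim: "g \<longlonglongrightarrow> L"
    and le: "\<And>n. g n \<le> (real n + 1) * f n"
  shows "L \<le> 0"
proof (rule ccontr)
  assume "\<not> L \<le> 0"
  hence Lp: "L > 0" by simp
  have ev: "eventually (\<lambda>n. g n > L/2) sequentially"
    using order_tendstoD(1)[OF lim, of "L/2"] Lp by simp
  have "eventually (\<lambda>n. norm ((L/2) / (real n + 1)) \<le> f n) sequentially"
  proof (rule eventually_mono[OF ev])
    fix n assume "g n > L/2"
    hence "L/2 < (real n + 1) * f n" using le[of n] by linarith
    moreover have "(real n + 1) * f n = f n * (real n + 1)" by (rule mult.commute)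
    ultimately have "L/2 \<le> f n * (real n + 1)" by linarith
    hence "(L/2) / (real n + 1) \<le> f n"
      by (subst pos_divide_le_eq) auto
    thus "norm ((L/2) / (real n + 1)) \<le> f n"
      using Lp by simp
  qed
  hence s1: "summable (\<lambda>n. (L/2) / (real n + 1))"
    by (rule summable_comparison_test_ev[OF _ sf])
  have "summable (\<lambda>n. (2/L) * ((L/2) / (real n + 1)))"
    using summable_mult[OF s1] by blast
  moreover have "(\<lambda>n. inverse (real (Suc n))) = (\<lambda>n. (2/L) * ((L/2)/(real n + 1)))"
    using Lp by (intro ext) (simp add: field_simps)
  ultimately have "summable (\<lambda>n. inverse (real (Suc n)))" by simp
  hence "summable (\<lambda>n. inverse (real n))"
    using summable_Suc_iff[where f="\<lambda>n. inverse (real n)"] by simp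
  thus False using not_summable_harmonic[where 'a=real] by simp
qed

lemma hB_nonneg:
  assumes "0 < h" "h < t" "t < 1"
  shows "hBernstein n k t h \<ge> 0"
proof -
  have "(\<Prod>i<k. t + real i * h) \<ge> 0" using assms by (intro prod_nonneg) auto
  moreover have "(\<Prod>i<n - k. 1 - t + real i * h) \<ge> 0" using assms by (intro prod_nonneg) auto
  moreover have "(\<Prod>i<n. 1 + real i * h) \<ge> 0" using assms by (intro prod_nonneg) auto
  ultimately show ?thesis unfolding hBernstein_def by simp
qed

lemma alg:
  fixes K X M Z J Y E u v D A Bp :: real
  assumes "K * X = M * Z" "J * Y = M * Z" "E = u + v" "D > 0" "E > 0"
  shows "K * (X * (A * u * Bp) / (D * E)) + J * (Y * (A * (Bp * v)) / (D * E)) = M * (Z * (A * Bp) / D)"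
proof -
  have "K * (X * (A * u * Bp) / (D * E)) + J * (Y * (A * (Bp * v)) / (D * E))
      = ((K * X) * u + (J * Y) * v) * (A * Bp) / (D * E)" by (simp add: algebra_simps add_divide_distrib)
  also have "\<dots> = (M * Z * E) * (A * Bp) / (D * E)" using assms(1-3) by (simp add: algebra_simps)
  also have "\<dots> = M * (Z * (A * Bp) / D)" using assms(4,5) by simp
  finally show ?thesis .
qed

lemma hB_rec:
  assumes "0 < h" "h < t" "t < 1"
  shows "real (k+1) * hBernstein (Suc m) (Suc k) t h + (real m + 1 - real k) * hBernstein (Suc m) k t h
     = (real m + 1) * hBernstein m k t h"
proof -
  consider "Suc m < k" | "Suc m = k" | "k \<le> m" by linarith
  thus ?thesis
  proof cases
    case 1 thus ?thesis by (simp add: hBernstein_def)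
  next
    case 2 thus ?thesis by (simp add: hBernstein_def)
  next
    case 3
    then obtain j where mj: "m = k + j" by (metis le_add_diff_inverse)
    define A where "A = (\<Prod>i<k. t + real i * h)"
    define Bp where "Bp = (\<Prod>i<j. 1 - t + real i * h)"
    define D where "D = (\<Prod>i<m. 1 + real i * h)"
    have Dpos: "D > 0" unfolding D_def using assms by (intro prod_pos ballI) (simp add: add_pos_nonneg)
    have hm: "1 + real m * h > 0" using assms by (simp add: add_pos_nonneg)
    have A1: "(\<Prod>i<Suc k. t + real i * h) = A * (t + real k * h)" by (simp add: A_def)
    have B1: "(\<Prod>i<Suc j. 1 - t + real i * h) = Bp * (1 - t + real j * h)" by (simp add: Bp_def)
    have D1: "(\<Prod>i<Suc m. 1 + real i * h) = D * (1 + real m * h)" by (simp add: D_def)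
    have c1: "real (k+1) * real (Suc m choose Suc k) = (real m + 1) * real (m choose k)"
    proof -
      have n: "Suc m * (m choose k) = (Suc m choose Suc k) * Suc k" by (rule Suc_times_binomial_eq)
      have "real (Suc m * (m choose k)) = real ((Suc m choose Suc k) * Suc k)" by (simp only: n)
      thus ?thesis by (simp del: binomial_Suc_Suc add: algebra_simps)
    qed
    have c2: "(real j + 1) * real (Suc m choose k) = (real m + 1) * real (m choose k)"
    proof -
      have "(Suc m - k) * (Suc m choose k) = Suc m * (m choose k)"
        using binomial_absorb_comp[of "Suc m" k] by simp
      moreover have "Suc m - k = Suc j" using mj by simp
      ultimately have "real (Suc j * (Suc m choose k)) = real (Suc m * (m choose k))" by metis
      thus ?thesis by (simp add: algebra_simps)
    qed
    have e1: "hBernstein (Suc m) (Suc k) t h = real (Suc m choose Suc k) * (A * (t + real k * h) * Bp) / (D * (1 + real m * h))"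
      unfolding hBernstein_def A_def Bp_def D_def using 3 mj by (simp del: binomial_Suc_Suc)
    have e2: "hBernstein (Suc m) k t h = real (Suc m choose k) * (A * (Bp * (1 - t + real j * h))) / (D * (1 + real m * h))"
      unfolding hBernstein_def A_def Bp_def D_def using 3 mj by (simp del: binomial_Suc_Suc add: Suc_diff_le)
    have e3: "hBernstein m k t h = real (m choose k) * (A * Bp) / D"
      unfolding hBernstein_def using 3 mj by (simp add: A_def Bp_def D_def)
    have mk: "real m + 1 - real k = real j + 1" using mj by simp
    have hm': "1 + real m * h = (t + real k * h) + (1 - t + real j * h)" using mj by (simp add: algebra_simps)
    show ?thesis unfolding e1 e2 e3 mk
      using alg[OF c1 c2 hm' Dpos hm] by simp
  qed
qed

lemma hB_tele:
  assumes "0 < h" "h < t" "t < 1"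
  shows "(\<Sum>n<Suc N. hBernstein n (Suc k) t h) =
    (\<Sum>n<Suc N. hBernstein n k t h) - (real N + 1) / (real k + 1) * hBernstein N k t h"
proof (induction N)
  case 0
  show ?case by (cases k) (simp_all add: hBernstein_def)
next
  case (Suc N)
  have r: "real (k+1) * hBernstein (Suc N) (Suc k) t h + (real N + 1 - real k) * hBernstein (Suc N) k t h
     = (real N + 1) * hBernstein N k t h" using hB_rec[OF assms] .
  have k1: "real k + 1 > 0" by simp
  show ?case using Suc.IH r k1
    by (simp only: sum.lessThan_Suc) (simp add: field_simps)
qed

lemma hB0_step:
  assumes "0 < h" "h < t" "t < 1"
  shows "hBernstein (Suc N) 0 t h * (1 + real N * h) = (1 - t + real N * h) * hBernstein N 0 t h"
proof -
  define P where "P = (\<Prod>i<N. 1 - t + real i * h)"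
  define D where "D = (\<Prod>i<N. 1 + real i * h)"
  have p: "1 + real N * h > 0" using assms by (simp add: add_pos_nonneg)
  have Dp: "D > 0" unfolding D_def using assms by (intro prod_pos ballI) (simp add: add_pos_nonneg)
  have e1: "hBernstein (Suc N) 0 t h = (P / D) * ((1 - t + real N * h) / (1 + real N * h))"
    unfolding hBernstein_def P_def D_def by simp
  have e2: "hBernstein N 0 t h = P / D"
    unfolding hBernstein_def P_def D_def by simp
  show ?thesis unfolding e1 e2 using p by simp
qed

lemma hB0_sum:
  assumes "0 < h" "h < t" "t < 1"
  shows "(\<Sum>n<N. hBernstein n 0 t h) = (1-h)/(t-h) - (1 - h + real N * h)/(t-h) * hBernstein N 0 t h"
proof (induction N)
  case 0
  have "t - h > 0" using assms by simp
  thus ?case by (simp add: hBernstein_def)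
next
  case (Suc N)
  have th: "t - h \<noteq> 0" using assms by simp
  have st: "hBernstein (Suc N) 0 t h * (1 + real N * h) = (1 - t + real N * h) * hBernstein N 0 t h"
    using hB0_step[OF assms] .
  have "(1 - h + real (Suc N) * h)/(t-h) * hBernstein (Suc N) 0 t h
      = (hBernstein (Suc N) 0 t h * (1 + real N * h)) / (t-h)" by (simp add: algebra_simps)
  also have "\<dots> = (1 - t + real N * h) * hBernstein N 0 t h / (t-h)" by (simp only: st)
  finally have a: "(1 - h + real (Suc N) * h)/(t-h) * hBernstein (Suc N) 0 t h = (1 - t + real N * h) * hBernstein N 0 t h / (t-h)" .
  have b: "hBernstein N 0 t h - (1 - h + real N * h)/(t-h) * hBernstein N 0 t h
     = - ((1 - t + real N * h) * hBernstein N 0 t h / (t-h))"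
  proof -
    define q where "q = 1 / (t - h)"
    have q1: "(t - h) * q = 1" using th by (simp add: q_def)
    have "hBernstein N 0 t h - (1 - h + real N * h) * q * hBernstein N 0 t h
       + (1 - t + real N * h) * q * hBernstein N 0 t h = hBernstein N 0 t h * (1 - (t - h) * q)"
      by (simp add: algebra_simps)
    also have "\<dots> = 0" using q1 by simp
    finally have "hBernstein N 0 t h - (1 - h + real N * h) * q * hBernstein N 0 t h
       + (1 - t + real N * h) * q * hBernstein N 0 t h = 0" .
    moreover have "(1 - h + real N * h)/(t-h) = (1 - h + real N * h) * q"
      "(1 - t + real N * h) * hBernstein N 0 t h / (t-h) = (1 - t + real N * h) * q * hBernstein N 0 t h"
      by (simp_all add: q_def)
    ultimately show ?thesis by (simp only:)
  qed
  have "(\<Sum>n<Suc N. hBernstein n 0 t h) = (\<Sum>n<N. hBernstein n 0 t h) + hBernstein N 0 t h" by simp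
  also have "\<dots> = (1-h)/(t-h) - (1 - h + real N * h)/(t-h) * hBernstein N 0 t h + hBernstein N 0 t h"
    by (simp only: Suc.IH)
  also have "\<dots> = (1-h)/(t-h) - (1 - t + real N * h) * hBernstein N 0 t h / (t-h)" using b by linarith
  also have "\<dots> = (1-h)/(t-h) - (1 - h + real (Suc N) * h)/(t-h) * hBernstein (Suc N) 0 t h"
    by (simp only: a)
  finally show ?case .
qed

lemma main_all:
  assumes a: "0 < h" "h < t" "t < 1"
  shows "summable (\<lambda>n. hBernstein n k t h) \<and> (\<Sum>n. hBernstein n k t h) = (1-h)/(t-h)"
proof (induction k)
  case 0
  define C where "C = (1-h)/(t-h)"
  have th: "t - h > 0" using a by simp
  have nn: "\<And>n. 0 \<le> hBernstein n 0 t h" using hB_nonneg[OF a] .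
  have wpos: "\<And>N. 0 \<le> (1 - h + real N * h)" using a by (simp add: add_nonneg_nonneg)
  have bound: "\<And>N. (\<Sum>n<N. hBernstein n 0 t h) \<le> C"
  proof -
    fix N
    have "0 \<le> (1 - h + real N * h)/(t-h) * hBernstein N 0 t h"
      by (intro mult_nonneg_nonneg divide_nonneg_nonneg wpos nn) (use th in linarith)
    thus "(\<Sum>n<N. hBernstein n 0 t h) \<le> C" unfolding C_def hB0_sum[OF a] by linarith
  qed
  have sm: "summable (\<lambda>n. hBernstein n 0 t h)"
    by (rule bounded_imp_summable[OF nn, where B=C]) (use bound in \<open>simp only: lessThan_Suc_atMost[symmetric]\<close>)
  define S where "S = (\<Sum>n. hBernstein n 0 t h)"
  have SC: "S \<le> C" unfolding S_def by (rule suminf_le_const[OF sm bound])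
  have gl: "(\<lambda>N. (t-h) * (C - (\<Sum>n<N. hBernstein n 0 t h))) \<longlonglongrightarrow> (t-h) * (C - S)"
    unfolding S_def by (intro tendsto_intros summable_LIMSEQ[OF sm])
  have "(t-h) * (C - S) \<le> 0"
  proof (rule key_zero[OF sm nn gl])
    fix N
    have "(t-h) * (C - (\<Sum>n<N. hBernstein n 0 t h)) = (1 - h + real N * h) * hBernstein N 0 t h"
      unfolding C_def hB0_sum[OF a] diff_diff_eq2 add_diff_cancel_left' using th by simp
    also have "\<dots> \<le> (real N + 1) * hBernstein N 0 t h"
    proof -
      have "real N * h \<le> real N" using a by (intro mult_left_le) auto
      hence "1 - h + real N * h \<le> real N + 1" using a by linarith
      thus ?thesis using nn[of N] by (rule mult_right_mono)
    qed
    finally show "(t-h) * (C - (\<Sum>n<N. hBernstein n 0 t h)) \<le> (real N + 1) * hBernstein N 0 t h" .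
  qed
  hence "C - S \<le> 0" using th by (smt (verit) mult_pos_pos)
  hence "S = C" using SC by linarith
  thus ?case using sm unfolding S_def C_def by blast
next
  case (Suc k)
  define C where "C = (1-h)/(t-h)"
  have nn: "\<And>n k. 0 \<le> hBernstein n k t h" using hB_nonneg[OF a] .
  have smk: "summable (\<lambda>n. hBernstein n k t h)" and Sk: "(\<Sum>n. hBernstein n k t h) = C"
    using Suc.IH unfolding C_def by auto
  have pk: "\<And>N. (\<Sum>n<N. hBernstein n k t h) \<le> C"
  proof -
    fix N
    have "(\<Sum>n<N. hBernstein n k t h) \<le> (\<Sum>n. hBernstein n k t h)"
      by (rule sum_le_suminf[OF smk]) (auto simp: nn)
    thus "(\<Sum>n<N. hBernstein n k t h) \<le> C" using Sk by simp
  qed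
  have bound: "\<And>N. (\<Sum>n<N. hBernstein n (Suc k) t h) \<le> C"
  proof -
    fix N show "(\<Sum>n<N. hBernstein n (Suc k) t h) \<le> C"
    proof (cases N)
      case 0 thus ?thesis using pk[of 0] by simp
    next
      case (Suc M)
      have "0 \<le> (real M + 1) / (real k + 1) * hBernstein M k t h" by (intro mult_nonneg_nonneg divide_nonneg_nonneg nn) auto
      thus ?thesis using hB_tele[OF a, where N=M and k=k] pk[of "Suc M"] unfolding Suc by linarith
    qed
  qed
  have sm: "summable (\<lambda>n. hBernstein n (Suc k) t h)"
    by (rule bounded_imp_summable[OF nn, where B=C]) (use bound in \<open>simp only: lessThan_Suc_atMost[symmetric]\<close>)
  define S where "S = (\<Sum>n. hBernstein n (Suc k) t h)"
  have SC: "S \<le> C" unfolding S_def by (rule suminf_le_const[OF sm bound])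
  have gl: "(\<lambda>N. (\<Sum>n<Suc N. hBernstein n k t h) - (\<Sum>n<Suc N. hBernstein n (Suc k) t h)) \<longlonglongrightarrow> C - S"
    unfolding S_def Sk[symmetric]
    by (intro tendsto_intros LIMSEQ_Suc[OF summable_LIMSEQ[OF smk]] LIMSEQ_Suc[OF summable_LIMSEQ[OF sm]])
  have "C - S \<le> 0"
  proof (rule key_zero[OF smk nn gl])
    fix N
    have "(\<Sum>n<Suc N. hBernstein n k t h) - (\<Sum>n<Suc N. hBernstein n (Suc k) t h)
       = (real N + 1) / (real k + 1) * hBernstein N k t h"
      unfolding hB_tele[OF a] by (simp only: diff_diff_eq2 add_diff_cancel_left')
    also have "\<dots> \<le> (real N + 1) * hBernstein N k t h"
    proof -
      have "(real N + 1) * 1 \<le> (real N + 1) * (real k + 1)" by (intro mult_left_mono) auto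
      hence "(real N + 1) / (real k + 1) \<le> real N + 1" by (subst pos_divide_le_eq) auto
      thus ?thesis using nn[of N k] by (rule mult_right_mono)
    qed
    finally show "(\<Sum>n<Suc N. hBernstein n k t h) - (\<Sum>n<Suc N. hBernstein n (Suc k) t h)
       \<le> (real N + 1) * hBernstein N k t h" .
  qed
  hence "S = C" using SC by linarith
  thus ?case using sm unfolding S_def C_def by blast
qed

theorem mainTheorem10:
  fixes h t :: real
  assumes "0 < h" "h < t" "t < 1"
  shows "(\<forall>k. summable (\<lambda>n. hBernstein n k t h)) \<and>
         (\<lambda>k. \<Sum>n. hBernstein n k t h) \<longlonglongrightarrow> (1 - h) / (t - h)"
proof
  show "\<forall>k. summable (\<lambda>n. hBernstein n k t h)" using main_all[OF assms] by blast
  have "(\<lambda>k. \<Sum>n. hBernstein n k t h) = (\<lambda>k. (1 - h) / (t - h))"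
    using main_all[OF assms] by blast
  thus "(\<lambda>k. \<Sum>n. hBernstein n k t h) \<longlonglongrightarrow> (1 - h) / (t - h)" by simp
qed

end
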